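(* Let $D$, $\Omega<0$, $\mu$ and $\varphi$ be as in the context. Then there exists $\lambda^\star>0$ such that for every $\lambda\ge\lambda^\star$, $\varphi_\lambda(x)>0$ for all $x\in H_\lambda$. Moreover, for every $\lambda_0>0$ there exists $R(\lambda_0)>0$ such that for every $\lambda\ge\lambda_0$ and every $x\in H_\lambda$ with $|x|\ge R(\lambda_0)$ one has $\varphi_\lambda(x)>0$.
   Context: Setting: $D\subset\mathbb{R}^2$ is a bounded simply connected domain with $C^1$ boundary and barycenter at the origin, belonging to the class $\Sigma_{\arccos\frac1{\sqrt5}}$ (for $x_0\in\partial D$ with outward unit normal $\vec\nu(x_0)$: (1) $x_0\cdot\vec\nu(x_0)\ge0$; (2) no point $x\in D$ satisfies $\frac{x-x_0}{|x-x_0|}\cdot\vec\nu(x_0)\ge\frac1{\sqrt5}$; (3) the reflection across the tangent line at $x_0$ of $\{x\in D:(x-x_0)\cdot\vec\nu(x_0)\ge0\}$ is contained in $D$). $\chi_D$ is a V-state with angular velocity $\Omega<0$: $\psi(x)-\frac12\Omega|x|^2=\mu$ on $\partial D$, where $\psi(x)=\frac1{2\pi}\int_D\log|x-y|\,dy$. Set $\varphi(x)=\mu+\frac12\Omega|x|^2-\psi(x)$; it satisfies $\varphi(x)=\mu+\frac12\Omega|x|^2-\frac1{2\pi}\int_{\mathbb{R}^2}\log|x-y|\,H(\varphi(y))\,dy$ for all $x$, with $H=\chi_{[0,\infty)}$. Notation: for $\lambda>0$, $H_\lambda=\{(x_1,x_2)\in\mathbb{R}^2:x_1<\lambda\}$,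 $T_\lambda=\{(\lambda,x_2):x_2\in\mathbb{R}\}$, $x_\lambda=(2\lambda-x_1,x_2)$ for $x=(x_1,x_2)$, and $\varphi_\lambda(x)=\varphi(x)-\varphi(x_\lambda)$. *)

theory Defs
  imports "HOL-Analysis.Analysis"
begin

type_synonym pt = "real ^ 2"

definition C1_boundary_chart :: "pt set \<Rightarrow> pt \<Rightarrow> real \<Rightarrow> (pt \<Rightarrow> real) \<Rightarrow> (pt \<Rightarrow> pt) \<Rightarrow> bool" where
  "C1_boundary_chart D x0 r rho g \<longleftrightarrow>
     r > 0 \<and>
     (\<forall>x\<in>ball x0 r. (rho has_derivative (\<lambda>h. g x \<bullet> h)) (at x) \<and> g x \<noteq> 0) \<and>
     continuous_on (ball x0 r) g \<and>
     D \<inter> ball x0 r = {x \<in> ball x0 r. rho x < 0}"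

definition C1_boundary :: "pt set \<Rightarrow> bool" where
  "C1_boundary D \<longleftrightarrow> (\<forall>x0\<in>frontier D. \<exists>r rho g. C1_boundary_chart D x0 r rho g)"

definition outward_unit_normal :: "pt set \<Rightarrow> pt \<Rightarrow> pt \<Rightarrow> bool" where
  "outward_unit_normal D x0 n \<longleftrightarrow> x0 \<in> frontier D \<and>
     (\<exists>r rho g. C1_boundary_chart D x0 r rho g \<and> n = (1 / norm (g x0)) *\<^sub>R g x0)"

definition tangent_reflect :: "pt \<Rightarrow> pt \<Rightarrow> pt \<Rightarrow> pt" where
  "tangent_reflect x0 n x = x - (2 * ((x - x0) \<bullet> n)) *\<^sub>R n"

text \<open>The class Sigma_theta with cos theta = c (here c = 1/sqrt 5), w.r.t. the normal field nu.\<close>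
definition in_Sigma :: "real \<Rightarrow> pt set \<Rightarrow> (pt \<Rightarrow> pt) \<Rightarrow> bool" where
  "in_Sigma c D nu \<longleftrightarrow> (\<forall>x0\<in>frontier D.
      x0 \<bullet> nu x0 \<ge> 0 \<and>
      \<not> (\<exists>x\<in>D. ((1 / norm (x - x0)) *\<^sub>R (x - x0)) \<bullet> nu x0 \<ge> c) \<and>
      tangent_reflect x0 (nu x0) ` {x \<in> D. (x - x0) \<bullet> nu x0 \<ge> 0} \<subseteq> D)"

definition psi :: "pt set \<Rightarrow> pt \<Rightarrow> real" where
  "psi D x = (1 / (2 * pi)) * (LINT y:D|lborel. ln (norm (x - y)))"

definition phi :: "pt set \<Rightarrow> real \<Rightarrow> real \<Rightarrow> pt \<Rightarrow> real" where
  "phi D \<Omega> \<mu> x = \<mu> + (1/2) * \<Omega> * (norm x)^2 - psi D x"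

definition refl_pt :: "real \<Rightarrow> pt \<Rightarrow> pt" where
  "refl_pt lam x = (\<chi> i. if i = 1 then 2 * lam - x $ 1 else x $ i)"

definition phi_lam :: "pt set \<Rightarrow> real \<Rightarrow> real \<Rightarrow> real \<Rightarrow> pt \<Rightarrow> real" where
  "phi_lam D \<Omega> \<mu> lam x = phi D \<Omega> \<mu> x - phi D \<Omega> \<mu> (refl_pt lam x)"

definition H_half :: "real \<Rightarrow> pt set" where
  "H_half lam = {x. x $ 1 < lam}"

end

theory Submission imports Defs begin

lemma norm2_2: "(norm (v::real^2))^2 = (v$1)^2 + (v$2)^2"
  unfolding power2_norm_eq_inner by (simp add: inner_vec_def sum_2 power2_eq_square)

lemma refl_1: "refl_pt l x $ 1 = 2*l - x$1" and refl_2: "refl_pt l x $ 2 = x$2"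
  by (auto simp: refl_pt_def)

lemma key_ab: "(norm (refl_pt l x - y))^2 - (norm (x - y))^2 = 4*(l - x$1)*(l - y$1)"
  unfolding norm2_2 by (simp add: refl_1 refl_2 algebra_simps power2_eq_square)

lemma key_x: "(norm (refl_pt l x))^2 - (norm x)^2 = 4*l*(l - x$1)"
  using key_ab[of l x 0] by simp

lemma comp1: "\<bar>(y::real^2)$1\<bar> \<le> norm y"
  by (metis Finite_Cartesian_Product.norm_nth_le real_norm_def)

lemma int_ln:
  assumes "bounded D" "open D" "\<forall>y\<in>closure D. z \<noteq> y"
  shows "set_integrable lborel D (\<lambda>y::real^2. ln (norm (z-y)))"
proof -
  have "continuous_on (closure D) (\<lambda>y::real^2. ln (norm (z-y)))"
    using assms(3) by (intro continuous_intros) auto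
  then have "set_integrable lborel (closure D) (\<lambda>y::real^2. ln (norm (z-y)))"
    unfolding set_integrable_def using assms(1)
    by (intro borel_integrable_compact) (auto simp: compact_closure)
  then show ?thesis
    by (rule set_integrable_subset) (use assms(2) closure_subset in auto)
qed

lemma ln_le_case:
  fixes f g :: "'a::euclidean_space \<Rightarrow> real"
  assumes "set_integrable lborel D g" "\<And>y. y \<in> D \<Longrightarrow> f y \<le> g y" "\<And>y. y \<in> D \<Longrightarrow> 0 \<le> g y"
  shows "(LINT y:D|lborel. f y) \<le> (LINT y:D|lborel. g y)"
proof (cases "set_integrable lborel D f")
  case True
  show ?thesis by (rule set_integral_mono) (use True assms in auto)
next
  case False
  then have "(LINT y:D|lborel. f y) = 0"
    unfolding set_integrable_def set_lebesgue_integral_def by (rule not_integrable_integral_eq)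
  moreover have "(LINT y:D|lborel. (0::real)) \<le> (LINT y:D|lborel. g y)"
    using assms by (intro set_integral_mono) (auto simp: set_integrable_def)
  ultimately show ?thesis by (simp add: set_lebesgue_integral_def)
qed

lemma phi_lam_eq: "phi_lam D \<Omega> \<mu> l x =
   -2*\<Omega>*l*(l - x$1) - (psi D x - psi D (refl_pt l x))"
proof -
  have e: "(norm (refl_pt l x))^2 = (norm x)^2 + 4*l*(l - x$1)" using key_x[of l x] by simp
  show ?thesis unfolding phi_lam_def phi_def e by (simp add: algebra_simps)
qed

theorem proposition3:
  fixes D :: "(real ^ 2) set" and nu :: "real ^ 2 \<Rightarrow> real ^ 2" and \<Omega> \<mu> :: real
  assumes "open D" and "connected D" and "bounded D" and "simply_connected D"
    and "C1_boundary D"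
    and "\<forall>x0\<in>frontier D. outward_unit_normal D x0 (nu x0)"
    and "integral D (\<lambda>y. y) = 0"
    and "in_Sigma (1 / sqrt 5) D nu"
    and "\<Omega> < 0"
    and "\<forall>x\<in>frontier D. psi D x - (1/2) * \<Omega> * (norm x)^2 = \<mu>"
  shows "(\<exists>ls>0. \<forall>l\<ge>ls. \<forall>x\<in>H_half l. phi_lam D \<Omega> \<mu> l x > 0) \<and>
         (\<forall>l0>0. \<exists>R>0. \<forall>l\<ge>l0. \<forall>x\<in>H_half l. norm x \<ge> R \<longrightarrow> phi_lam D \<Omega> \<mu> l x > 0)"
proof -
  note bD = assms(3) and oD = assms(1) and Om = assms(9)
  obtain \<rho>0 where "\<forall>y\<in>closure D. norm y \<le> \<rho>0"
    using bounded_closure[OF bD] unfolding bounded_iff by blast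
  define \<rho> where "\<rho> = max \<rho>0 1"
  have rpos: "\<rho> > 0" by (simp add: \<rho>_def)
  have rb: "\<And>y. y \<in> closure D \<Longrightarrow> norm y \<le> \<rho>"
    using \<open>\<forall>y\<in>closure D. norm y \<le> \<rho>0\<close> \<rho>_def by force
  have rb1: "\<And>y. y \<in> closure D \<Longrightarrow> \<bar>y$1\<bar> \<le> \<rho>" using rb comp1 order_trans by blast
  have P1: "\<forall>l\<ge>\<rho>+1. \<forall>x\<in>H_half l. phi_lam D \<Omega> \<mu> l x > 0"
  proof (intro allI impI ballI)
    fix l x assume l: "\<rho> + 1 \<le> l" and x: "x \<in> H_half l"
    then have x1: "x$1 < l" by (simp add: H_half_def)
    have gge: "1 \<le> norm (refl_pt l x - y)" if "y \<in> closure D" for y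
    proof -
      have "1 \<le> (refl_pt l x - y)$1" using rb1[OF that] l x1 by (simp add: refl_1)
      then show ?thesis using comp1[of "refl_pt l x - y"] by linarith
    qed
    have gint: "set_integrable lborel D (\<lambda>y. ln (norm (refl_pt l x - y)))"
      using gge by (intro int_ln bD oD) force
    have "(LINT y:D|lborel. ln (norm (x - y))) \<le> (LINT y:D|lborel. ln (norm (refl_pt l x - y)))"
    proof (rule ln_le_case[OF gint])
      fix y assume y: "y \<in> D"
      then have yc: "y \<in> closure D" using closure_subset by blast
      show "0 \<le> ln (norm (refl_pt l x - y))" using gge[OF yc] by simp
      show "ln (norm (x - y)) \<le> ln (norm (refl_pt l x - y))"
      proof (cases "x = y")
        case True then show ?thesis using gge[OF yc] by simp
      next
        case False
        have "(norm (x - y))^2 \<le> (norm (refl_pt l x - y))^2"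
          using key_ab[of l x y] rb1[OF yc] l x1
          by (smt (verit) mult_nonneg_nonneg)
        then have "norm (x - y) \<le> norm (refl_pt l x - y)"
          using power2_le_imp_le by force
        moreover have "0 < norm (x - y)" using False by simp
        ultimately show ?thesis by (subst ln_le_cancel_iff) auto
      qed
    qed
    then have "psi D x \<le> psi D (refl_pt l x)" unfolding psi_def by (simp add: divide_right_mono)
    moreover have "-2*\<Omega>*l*(l - x$1) > 0" using Om l x1 rpos by (simp add: mult_pos_pos mult_neg_pos)
    ultimately show "phi_lam D \<Omega> \<mu> l x > 0" unfolding phi_lam_eq by linarith
  qed
  have P2: "\<exists>R>0. \<forall>l\<ge>l0. \<forall>x\<in>H_half l. norm x \<ge> R \<longrightarrow> phi_lam D \<Omega> \<mu> l x > 0"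
    if l0: "l0 > 0" for l0
  proof -
    define m where "m = measure lborel D"
    define K where "K = -2*\<Omega>*l0"
    define q where "q = m*\<rho>/pi"
    have Kpos: "K > 0" using Om l0 by (simp add: K_def mult_neg_pos)
    have q0: "q \<ge> 0" using rpos by (simp add: q_def m_def)
    define R where "R = \<rho> + 1 + q/K"
    have "q/K \<ge> 0" using q0 Kpos by simp
    then have Rpos: "R > 0" using rpos unfolding R_def by linarith
    show ?thesis
    proof (intro exI[of _ R] conjI Rpos allI impI ballI)
      fix l x assume l: "l0 \<le> l" and x: "x \<in> H_half l" and xR: "R \<le> norm x"
      then have x1: "x$1 < l" by (simp add: H_half_def)
      define d where "d = norm x - \<rho>"
      have d1: "d \<ge> 1 + q/K" using xR by (simp add: d_def R_def)
      have dpos: "d \<ge> 1" using d1 q0 Kpos by (smt (verit) divide_nonneg_pos)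
      have nx: "norm x \<le> norm (refl_pt l x)"
        using key_x[of l x] l l0 x1 by (smt (verit) mult_pos_pos power2_le_imp_le norm_ge_zero)
      have A: "d \<le> norm (x - y)" if "y \<in> closure D" for y
        using rb[OF that] norm_triangle_ineq2[of x y] by (simp add: d_def)
      have B: "d \<le> norm (refl_pt l x - y)" if "y \<in> closure D" for y
        using rb[OF that] norm_triangle_ineq2[of "refl_pt l x" y] nx by (simp add: d_def)
      have fint: "set_integrable lborel D (\<lambda>y. ln (norm (x - y)))"
        using A dpos by (intro int_ln bD oD) force
      have gint: "set_integrable lborel D (\<lambda>y. ln (norm (refl_pt l x - y)))"
        using B dpos by (intro int_ln bD oD) force
      define c where "c = 2*(l - x$1)*\<rho>/d^2"
      have pw: "ln (norm (x - y)) - ln (norm (refl_pt l x - y)) \<le> c" if y: "y \<in> D" for y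
      proof -
        have yc: "y \<in> closure D" using y closure_subset by blast
        define a where "a = norm (x - y)"
        define b where "b = norm (refl_pt l x - y)"
        have apos: "a > 0" and bpos: "b > 0" and bd: "d \<le> b"
          using A[OF yc] B[OF yc] dpos by (auto simp: a_def b_def)
        have ab: "b^2 - a^2 = 4*(l - x$1)*(l - y$1)" using key_ab[of l x y] by (simp add: a_def b_def)
        have "2*(ln a - ln b) = ln (a^2/b^2)" using apos bpos by (simp add: ln_div ln_mult power2_eq_square)
        also have "\<dots> \<le> a^2/b^2 - 1" using apos bpos by (intro ln_le_minus_one) simp
        also have "\<dots> = 4*(l - x$1)*(y$1 - l)/b^2" using ab bpos by (simp add: field_simps)
        also have "\<dots> \<le> 4*(l - x$1)*\<rho>/b^2"
          using rb1[OF yc] l l0 x1 bpos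
          by (intro divide_right_mono mult_left_mono) auto
        also have "\<dots> \<le> 4*(l - x$1)*\<rho>/d^2"
          using bd dpos x1 rpos by (intro divide_left_mono mult_pos_pos power_mono) auto
        finally have "2*(ln a - ln b) \<le> 4*(l - x$1)*\<rho>/d^2" .
        moreover have "4*(l - x$1)*\<rho>/d^2 = 2*c" by (simp add: c_def)
        ultimately have "2*(ln a - ln b) \<le> 2*c" by (simp only:)
        then show ?thesis unfolding a_def b_def by simp
      qed
      have "(LINT y:D|lborel. ln (norm (x - y)) - ln (norm (refl_pt l x - y))) \<le> (LINT y:D|lborel. c)"
      proof (rule set_integral_mono[OF set_integral_diff(1)[OF fint gint]])
        show "set_integrable lborel D (\<lambda>y. c)" unfolding set_integrable_def
        proof -
          have "integrable lborel (indicator D :: _ \<Rightarrow> real)"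
            using emeasure_bounded_finite[OF bD] borel_open[OF oD]
            by (simp add: integrable_indicator_iff)
          then show "integrable lborel (\<lambda>x. indicator D x *\<^sub>R c)"
            by (simp add: integrable_mult_left_iff)
        qed
      qed (rule pw)
      also have "\<dots> = m * c" unfolding m_def
        using emeasure_bounded_finite[OF bD] by (subst set_integral_const) (auto intro: borel_open[OF oD])
      finally have I: "(LINT y:D|lborel. ln (norm (x - y))) - (LINT y:D|lborel. ln (norm (refl_pt l x - y))) \<le> m*c"
        using set_integral_diff(2)[OF fint gint] by simp
      have "psi D x - psi D (refl_pt l x) = (1/(2*pi)) * ((LINT y:D|lborel. ln (norm (x - y))) - (LINT y:D|lborel. ln (norm (refl_pt l x - y))))"
        unfolding psi_def by (simp add: algebra_simps)
      also have "\<dots> \<le> (1/(2*pi)) * (m*c)" using I by (intro mult_left_mono) auto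
      also have "\<dots> = (l - x$1) * (q / d^2)" using dpos by (simp add: c_def q_def field_simps)
      also have "\<dots> < (l - x$1) * K"
      proof (intro mult_strict_left_mono)
        have "q / d^2 \<le> q / d" using dpos q0 by (intro divide_left_mono) (auto simp: power2_eq_square)
        also have "q < K * d"
        proof -
          have "K*d \<ge> K*(1 + q/K)" using d1 Kpos by simp
          also have "K*(1 + q/K) = K + q" using Kpos by (simp add: field_simps)
          finally show ?thesis using Kpos by linarith
        qed
        then have "q / d < K" using dpos by (simp add: field_simps)
        finally show "q / d^2 < K" .
      qed (use x1 in simp)
      also have "\<dots> \<le> -2*\<Omega>*l*(l - x$1)"
        using x1 l Om by (simp add: K_def mult_right_mono)
      finally show "phi_lam D \<Omega> \<mu> l x > 0" unfolding phi_lam_eq by linarith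
    qed
  qed
  show ?thesis using P1 P2 rpos by (intro conjI exI[of _ "\<rho>+1"]) auto
qed

end
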